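(* Consider an implication of canonical form $(\ast)$ and an environment $\eta$. Suppose there is a subset $B\subseteq V$ such that (B1) $\sum_{c\in B}\Pi(i)(c)\le1$ for all $1\le i\le M$; (B2) for every $1\le j\le N$, either $\sum_{c\in V}\Omega(j)(c)=0$ or $\sum_{c\in B}\Omega(j)(c)=1$; (B3) for all $1\le i\le M$, $1\le j\le N$ with $\Pi(i)\not\ge\Omega(j)$ there is $c\in B$ with $\Pi(i)(c)<\Omega(j)(c)$. If the implication is unary $\eta$-valid, then the Parametricity Condition holds for it and $\eta$.
   Context: $\mathsf{Heap}$: finite partial functions $\mathsf{PosInt}\to\mathsf{Int}$; $g\sqsubseteq h$ means $h$ extends $g$; $h\cdot g$ union of disjoint heaps; componentwise on $\mathsf{Heap}^n$. $\mathsf{IRel}_n$: upward closed subsets of $\mathsf{Heap}^n$; $p*q=\{\mathbf f\cdot\mathbf g\mid\mathbf f\in p,\mathbf g\in q,\text{componentwise disjoint}\}$; $\Delta_n(X)=\{(h_1,\dots,h_n)\mid\exists f\in X.\ \forall k.\ f\sqsubseteq h_k\}$. Assertions: built from primitive assertions $P$, assertion variables, $\mathsf{true},\mathsf{false},\wedge,\vee,*$, quantifiers over integer variables. $n$-ary meaning under $\eta$ and $\rho:\mathsf{AVar}\to\mathsf{IRel}_n$: $[\![P]\!]^n=\Delta_n([\![P]\!]^{\mathrm{prim}}_\eta)$, $[\![a]\!]^n=\rho(a)$, connectives by $\mathsf{Heap}^n,\emptyset,\cap,\cup,*$, quantifiers by unions/intersections. $n$-ary $\eta$-validity of $\varphi\Rightarrow\psi$: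 $[\![\varphi]\!]^n_{\eta,\rho}\subseteq[\![\psi]\!]^n_{\eta,\rho}$ for all $\rho:\mathsf{AVar}\to\mathsf{IRel}_n$ (unary: $n=1$). Canonical form $(\ast)$: $\bigwedge_{i=1}^M\varphi_i*a_{i,1}*\cdots*a_{i,M_i}\Rightarrow\bigvee_{j=1}^N\psi_j*b_{j,1}*\cdots*b_{j,N_j}$, $M\ge1$, $N\ge0$, $\varphi_i,\psi_j$ free of assertion variables, every $b_{j,k}$ among the $a_{i,k}$. $V=\{a_{i,k}\}$; $\Pi(i)(c)=|\{k\mid a_{i,k}=c\}|$, $\Omega(j)(c)=|\{k\mid b_{j,k}=c\}|$; $\Pi(i)\ge\Omega(j)$ iff $\Pi(i)(c)\ge\Omega(j)(c)$ for all $c\in V$. Disjunct $j$ is empty if $N_j=0$. Parametricity Condition: for all $h,h_1,\dots,h_M\in\mathsf{Heap}$ with $h_i\sqsubseteq h$ and $h_i\in[\![\varphi_i]\!]^1_\eta$ for all $i$, either (1) there are $i,j$ with $h_i\in[\![\psi_j]\!]^1_\eta$ and $\Pi(i)\ge\Omega(j)$, or (2) there is an empty disjunct $j$ with $h\in[\![\psi_j]\!]^1_\eta$. *)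

theory Defs
  imports Main
begin

text \<open>Heaps: finite partial functions from positive integers to integers.
  Positive integers are represented by nat keys different from 0.\<close>

typedef heap = "{h :: nat \<rightharpoonup> int. finite (dom h) \<and> 0 \<notin> dom h}"
  by (rule exI[of _ Map.empty]) simp

definition heap_le :: "heap \<Rightarrow> heap \<Rightarrow> bool" (infix "\<sqsubseteq>" 50) where
  "g \<sqsubseteq> h \<longleftrightarrow> Rep_heap g \<subseteq>\<^sub>m Rep_heap h"

definition heap_disj :: "heap \<Rightarrow> heap \<Rightarrow> bool" where
  "heap_disj f g \<longleftrightarrow> dom (Rep_heap f) \<inter> dom (Rep_heap g) = {}"

definition heap_union :: "heap \<Rightarrow> heap \<Rightarrow> heap" where
  "heap_union f g = Abs_heap (Rep_heap f ++ Rep_heap g)"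

definition upclosed :: "heap set \<Rightarrow> bool" where
  "upclosed X \<longleftrightarrow> (\<forall>g h. g \<in> X \<longrightarrow> g \<sqsubseteq> h \<longrightarrow> h \<in> X)"

definition hstar :: "heap set \<Rightarrow> heap set \<Rightarrow> heap set" where
  "hstar p q = {heap_union f g | f g. f \<in> p \<and> g \<in> q \<and> heap_disj f g}"

definition Delta1 :: "heap set \<Rightarrow> heap set" where
  "Delta1 X = {h. \<exists>f\<in>X. f \<sqsubseteq> h}"

datatype ('p, 'v, 'x) assn =
    Prim 'p
  | AVar 'v
  | ATrue
  | AFalse
  | AConj "('p, 'v, 'x) assn" "('p, 'v, 'x) assn"
  | ADisj "('p, 'v, 'x) assn" "('p, 'v, 'x) assn"
  | AStar "('p, 'v, 'x) assn" "('p, 'v, 'x) assn"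
  | AEx 'x "('p, 'v, 'x) assn"
  | AAll 'x "('p, 'v, 'x) assn"

fun avars :: "('p, 'v, 'x) assn \<Rightarrow> 'v set" where
  "avars (Prim P) = {}"
| "avars (AVar a) = {a}"
| "avars ATrue = {}"
| "avars AFalse = {}"
| "avars (AConj p q) = avars p \<union> avars q"
| "avars (ADisj p q) = avars p \<union> avars q"
| "avars (AStar p q) = avars p \<union> avars q"
| "avars (AEx x p) = avars p"
| "avars (AAll x p) = avars p"

text \<open>Unary meaning. prim P eta is the primitive meaning [[P]]^prim_eta (arbitrary, given).\<close>
fun sem1 :: "('p \<Rightarrow> ('x \<Rightarrow> int) \<Rightarrow> heap set) \<Rightarrow> ('x \<Rightarrow> int) \<Rightarrow> ('v \<Rightarrow> heap set)
              \<Rightarrow> ('p, 'v, 'x) assn \<Rightarrow> heap set" where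
  "sem1 prim \<eta> \<rho> (Prim P) = Delta1 (prim P \<eta>)"
| "sem1 prim \<eta> \<rho> (AVar a) = \<rho> a"
| "sem1 prim \<eta> \<rho> ATrue = UNIV"
| "sem1 prim \<eta> \<rho> AFalse = {}"
| "sem1 prim \<eta> \<rho> (AConj p q) = sem1 prim \<eta> \<rho> p \<inter> sem1 prim \<eta> \<rho> q"
| "sem1 prim \<eta> \<rho> (ADisj p q) = sem1 prim \<eta> \<rho> p \<union> sem1 prim \<eta> \<rho> q"
| "sem1 prim \<eta> \<rho> (AStar p q) = hstar (sem1 prim \<eta> \<rho> p) (sem1 prim \<eta> \<rho> q)"
| "sem1 prim \<eta> \<rho> (AEx x p) = (\<Union>v. sem1 prim (\<eta>(x := v)) \<rho> p)"
| "sem1 prim \<eta> \<rho> (AAll x p) = (\<Inter>v. sem1 prim (\<eta>(x := v)) \<rho> p)"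

definition unary_valid :: "('p \<Rightarrow> ('x \<Rightarrow> int) \<Rightarrow> heap set) \<Rightarrow> ('x \<Rightarrow> int)
     \<Rightarrow> ('p, 'v, 'x) assn \<Rightarrow> ('p, 'v, 'x) assn \<Rightarrow> bool" where
  "unary_valid prim \<eta> \<phi> \<psi> \<longleftrightarrow>
     (\<forall>\<rho>. (\<forall>a. upclosed (\<rho> a)) \<longrightarrow> sem1 prim \<eta> \<rho> \<phi> \<subseteq> sem1 prim \<eta> \<rho> \<psi>)"

definition star_vars :: "('p, 'v, 'x) assn \<Rightarrow> 'v list \<Rightarrow> ('p, 'v, 'x) assn" where
  "star_vars \<phi> as = foldl (\<lambda>acc a. AStar acc (AVar a)) \<phi> as"

fun conj_list :: "('p, 'v, 'x) assn list \<Rightarrow> ('p, 'v, 'x) assn" where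
  "conj_list [] = ATrue"
| "conj_list [p] = p"
| "conj_list (p # ps) = AConj p (conj_list ps)"

fun disj_list :: "('p, 'v, 'x) assn list \<Rightarrow> ('p, 'v, 'x) assn" where
  "disj_list [] = AFalse"
| "disj_list (p # ps) = ADisj p (disj_list ps)"

text \<open>Left side: list L of pairs (phi_i, [a_i1,...,a_iMi]); right side: list R of pairs
  (psi_j, [b_j1,...,b_jNj]).  Indices are 0-based.\<close>
definition canon_lhs :: "(('p, 'v, 'x) assn \<times> 'v list) list \<Rightarrow> ('p, 'v, 'x) assn" where
  "canon_lhs L = conj_list (map (\<lambda>(\<phi>, as). star_vars \<phi> as) L)"

definition canon_rhs :: "(('p, 'v, 'x) assn \<times> 'v list) list \<Rightarrow> ('p, 'v, 'x) assn" where
  "canon_rhs R = disj_list (map (\<lambda>(\<psi>, bs). star_vars \<psi> bs) R)"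

definition canonical :: "(('p, 'v, 'x) assn \<times> 'v list) list \<Rightarrow> (('p, 'v, 'x) assn \<times> 'v list) list \<Rightarrow> bool" where
  "canonical L R \<longleftrightarrow> L \<noteq> [] \<and>
     (\<forall>i<length L. avars (fst (L ! i)) = {}) \<and>
     (\<forall>j<length R. avars (fst (R ! j)) = {}) \<and>
     (\<forall>j<length R. set (snd (R ! j)) \<subseteq> (\<Union>i<length L. set (snd (L ! i))))"

definition Vset :: "(('p, 'v, 'x) assn \<times> 'v list) list \<Rightarrow> 'v set" where
  "Vset L = (\<Union>i<length L. set (snd (L ! i)))"

definition Pi :: "(('p, 'v, 'x) assn \<times> 'v list) list \<Rightarrow> nat \<Rightarrow> 'v \<Rightarrow> nat" where
  "Pi L i c = count_list (snd (L ! i)) c"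

definition Omega :: "(('p, 'v, 'x) assn \<times> 'v list) list \<Rightarrow> nat \<Rightarrow> 'v \<Rightarrow> nat" where
  "Omega R j c = count_list (snd (R ! j)) c"

definition Pi_ge_Omega :: "(('p, 'v, 'x) assn \<times> 'v list) list \<Rightarrow> (('p, 'v, 'x) assn \<times> 'v list) list
     \<Rightarrow> nat \<Rightarrow> nat \<Rightarrow> bool" where
  "Pi_ge_Omega L R i j \<longleftrightarrow> (\<forall>c\<in>Vset L. Pi L i c \<ge> Omega R j c)"

text \<open>Parametricity condition.  The phi_i, psi_j are free of assertion variables, so their
  meaning does not depend on rho; we evaluate them under the (upward closed) rho = (\<lambda>_. {}).\<close>
definition parametricity_condition :: "('p \<Rightarrow> ('x \<Rightarrow> int) \<Rightarrow> heap set) \<Rightarrow> ('x \<Rightarrow> int)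
     \<Rightarrow> (('p, 'v, 'x) assn \<times> 'v list) list \<Rightarrow> (('p, 'v, 'x) assn \<times> 'v list) list \<Rightarrow> bool" where
  "parametricity_condition prim \<eta> L R \<longleftrightarrow>
     (\<forall>h hs. (\<forall>i<length L. hs i \<sqsubseteq> h \<and> hs i \<in> sem1 prim \<eta> (\<lambda>_. {}) (fst (L ! i))) \<longrightarrow>
        (\<exists>i<length L. \<exists>j<length R. hs i \<in> sem1 prim \<eta> (\<lambda>_. {}) (fst (R ! j)) \<and> Pi_ge_Omega L R i j)
      \<or> (\<exists>j<length R. snd (R ! j) = [] \<and> h \<in> sem1 prim \<eta> (\<lambda>_. {}) (fst (R ! j))))"

end

theory Submission
  imports Defs
begin

lemma heap_wf: "finite (dom (Rep_heap h)) \<and> 0 \<notin> dom (Rep_heap h)"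
  using Rep_heap[of h] by simp

definition hminus :: "heap \<Rightarrow> heap \<Rightarrow> heap" where
  "hminus h g = Abs_heap (Rep_heap h |` (- dom (Rep_heap g)))"

definition hempty :: heap where "hempty = Abs_heap Map.empty"

lemma Rep_hminus: "Rep_heap (hminus h g) = Rep_heap h |` (- dom (Rep_heap g))"
  unfolding hminus_def
  apply (rule Abs_heap_inverse)
  using heap_wf[of h] by (auto intro: finite_subset)

lemma Rep_hempty: "Rep_heap hempty = Map.empty"
  unfolding hempty_def by (rule Abs_heap_inverse) simp

lemma Rep_union: "Rep_heap (heap_union f g) = Rep_heap f ++ Rep_heap g"
  unfolding heap_union_def
  apply (rule Abs_heap_inverse)
  using heap_wf[of f] heap_wf[of g] by auto

lemma heap_eqI: "Rep_heap f = Rep_heap g \<Longrightarrow> f = g"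
  by (simp add: Rep_heap_inject)

lemma split_heap:
  assumes "g \<sqsubseteq> h"
  shows "h = heap_union g (hminus h g)" "heap_disj g (hminus h g)"
proof -
  show "heap_disj g (hminus h g)" unfolding heap_disj_def Rep_hminus by auto
  show "h = heap_union g (hminus h g)"
  proof (rule heap_eqI, rule ext)
    fix x
    show "Rep_heap h x = Rep_heap (heap_union g (hminus h g)) x"
      using assms unfolding Rep_union Rep_hminus heap_le_def map_le_def
      by (cases "x \<in> dom (Rep_heap g)") (auto simp: map_add_def restrict_map_def split: option.splits)
  qed
qed

lemma union_empty: "heap_union g hempty = g" "heap_disj g hempty"
  by (auto intro!: heap_eqI simp: Rep_union Rep_hempty heap_disj_def)

lemma le_union1: "heap_disj f g \<Longrightarrow> f \<sqsubseteq> heap_union f g"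
  unfolding heap_le_def heap_disj_def Rep_union
  by (metis map_add_comm map_le_map_add)

lemma le_union2: "g \<sqsubseteq> heap_union f g"
  unfolding heap_le_def Rep_union by (simp add: map_le_map_add)

lemma le_trans: "f \<sqsubseteq> g \<Longrightarrow> g \<sqsubseteq> h \<Longrightarrow> f \<sqsubseteq> h"
  unfolding heap_le_def by (rule map_le_trans)

lemma disj_sym: "heap_disj f g \<Longrightarrow> heap_disj g f"
  unfolding heap_disj_def by auto

lemma disj_mono: "heap_disj f g \<Longrightarrow> f' \<sqsubseteq> f \<Longrightarrow> heap_disj f' g"
proof -
  assume a: "heap_disj f g" "f' \<sqsubseteq> f"
  have "dom (Rep_heap f') \<subseteq> dom (Rep_heap f)" using a(2) unfolding heap_le_def by (rule map_le_implies_dom_le)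
  then show ?thesis using a(1) unfolding heap_disj_def by blast
qed

lemma upclosed_hstar:
  assumes "upclosed p" "upclosed q"
  shows "upclosed (hstar p q)"
  unfolding upclosed_def
proof (intro allI impI)
  fix k h assume k: "k \<in> hstar p q" and kh: "k \<sqsubseteq> h"
  then obtain f g where fg: "k = heap_union f g" "f \<in> p" "g \<in> q" "heap_disj f g"
    unfolding hstar_def by auto
  have fh: "f \<sqsubseteq> h" using le_trans[OF le_union1[OF fg(4)]] kh fg(1) by simp
  have "g \<sqsubseteq> hminus h f"
    unfolding heap_le_def map_le_def
  proof
    fix x assume x: "x \<in> dom (Rep_heap g)"
    then have nf: "x \<notin> dom (Rep_heap f)" using fg(4) unfolding heap_disj_def by blast
    have ku: "Rep_heap k x = Rep_heap g x" using x unfolding fg(1) Rep_union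
      by (simp add: map_add_dom_app_simps(1))
    have "x \<in> dom (Rep_heap k)" using x unfolding fg(1) Rep_union by simp
    then have "Rep_heap k x = Rep_heap h x" using kh unfolding heap_le_def map_le_def by blast
    then show "Rep_heap g x = Rep_heap (hminus h f) x" using ku nf unfolding Rep_hminus by simp
  qed
  then have "hminus h f \<in> q" using assms(2) fg(3) unfolding upclosed_def by blast
  then show "h \<in> hstar p q" unfolding hstar_def
    using split_heap[OF fh] fg(2) by blast
qed

lemma upclosed_sem:
  "(\<forall>a. upclosed (\<rho> a)) \<Longrightarrow> upclosed (sem1 prim \<eta> \<rho> \<phi>)"
proof (induction \<phi> arbitrary: \<eta>)
  case (Prim x)
  then show ?case by (auto simp: upclosed_def Delta1_def intro: le_trans)
next
  case (AStar \<phi>1 \<phi>2)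
  then show ?case by (simp add: upclosed_hstar)
qed (simp_all add: upclosed_def, blast+)

lemma sem_irrel:
  "(\<forall>a\<in>avars \<phi>. \<rho> a = \<rho>' a) \<Longrightarrow> sem1 prim \<eta> \<rho> \<phi> = sem1 prim \<eta> \<rho>' \<phi>"
  by (induction \<phi> arbitrary: \<eta>) auto

lemma sem_conj_list:
  "ps \<noteq> [] \<Longrightarrow> (x \<in> sem1 prim \<eta> \<rho> (conj_list ps)) = (\<forall>p\<in>set ps. x \<in> sem1 prim \<eta> \<rho> p)"
  by (induction ps rule: conj_list.induct) auto

lemma sem_disj_list:
  "(x \<in> sem1 prim \<eta> \<rho> (disj_list ps)) = (\<exists>p\<in>set ps. x \<in> sem1 prim \<eta> \<rho> p)"
  by (induction ps) auto

lemma star_vars_snoc: "star_vars \<phi> (as @ [a]) = AStar (star_vars \<phi> as) (AVar a)"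
  by (simp add: star_vars_def)

lemma star_vars_append: "star_vars \<phi> (xs @ ys) = star_vars (star_vars \<phi> xs) ys"
  by (simp add: star_vars_def)

lemma star_vars_nil: "star_vars \<phi> [] = \<phi>"
  by (simp add: star_vars_def)

lemma lemA:
  "g \<in> sem1 prim \<eta> \<rho> \<phi> \<Longrightarrow> \<forall>a\<in>set as. hempty \<in> \<rho> a \<Longrightarrow> g \<in> sem1 prim \<eta> \<rho> (star_vars \<phi> as)"
proof (induction as rule: rev_induct)
  case Nil then show ?case by (simp add: star_vars_nil)
next
  case (snoc a as)
  then have "g \<in> sem1 prim \<eta> \<rho> (star_vars \<phi> as)" by simp
  then show ?case using snoc.prems union_empty[of g]
    unfolding star_vars_snoc by (simp add: hstar_def) metis
qed

lemma lemB:
  assumes "g \<in> sem1 prim \<eta> \<rho> \<phi>" "r \<in> \<rho> c" "heap_disj g r"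
    "\<forall>a\<in>set xs \<union> set ys. hempty \<in> \<rho> a"
  shows "heap_union g r \<in> sem1 prim \<eta> \<rho> (star_vars \<phi> (xs @ c # ys))"
proof -
  have "g \<in> sem1 prim \<eta> \<rho> (star_vars \<phi> xs)" using lemA[of g prim \<eta> \<rho> \<phi> xs] assms by auto
  then have "heap_union g r \<in> sem1 prim \<eta> \<rho> (star_vars \<phi> (xs @ [c]))"
    unfolding star_vars_snoc using assms by (auto simp: hstar_def)
  then have "heap_union g r \<in> sem1 prim \<eta> \<rho> (star_vars \<phi> ((xs @ [c]) @ ys))"
    using lemA[of "heap_union g r" prim \<eta> \<rho> "star_vars \<phi> (xs @ [c])" ys] assms(4)
    unfolding star_vars_append[of _ "xs @ [c]" ys] by simp
  then show ?thesis by simp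
qed

lemma lemC:
  "h \<in> sem1 prim \<eta> \<rho> (star_vars \<psi> bs) \<Longrightarrow>
   \<exists>g0\<in>sem1 prim \<eta> \<rho> \<psi>. g0 \<sqsubseteq> h \<and> (\<forall>c\<in>set bs. \<exists>r\<in>\<rho> c. r \<sqsubseteq> h \<and> heap_disj g0 r)"
proof (induction bs arbitrary: h rule: rev_induct)
  case Nil then show ?case unfolding star_vars_nil heap_le_def by (intro bexI[of _ h]) auto
next
  case (snoc a bs)
  then obtain f g where fg: "h = heap_union f g" "f \<in> sem1 prim \<eta> \<rho> (star_vars \<psi> bs)"
     "g \<in> \<rho> a" "heap_disj f g"
    unfolding star_vars_snoc by (auto simp: hstar_def)
  from snoc.IH[OF fg(2)] obtain g0 where g0: "g0\<in>sem1 prim \<eta> \<rho> \<psi>" "g0 \<sqsubseteq> f"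
    "\<forall>c\<in>set bs. \<exists>r\<in>\<rho> c. r \<sqsubseteq> f \<and> heap_disj g0 r" by blast
  have fh: "f \<sqsubseteq> h" using fg le_union1 by simp
  have gh: "g \<sqsubseteq> h" using fg le_union2 by simp
  show ?case
    apply (rule bexI[OF _ g0(1)])
    using g0 fh gh fg(3,4) disj_mono le_trans by fastforce
qed


lemma sum_ge1: "finite A \<Longrightarrow> c \<in> A \<Longrightarrow> (f::'a\<Rightarrow>nat) c \<le> sum f A"
  by (rule member_le_sum) auto

lemma sum_ge2: "finite A \<Longrightarrow> a\<in>A \<Longrightarrow> c\<in>A \<Longrightarrow> a\<noteq>c \<Longrightarrow> (f::'a\<Rightarrow>nat) a + f c \<le> sum f A"
proof -
  assume "finite A" "a\<in>A" "c\<in>A" "a\<noteq>c"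
  then have "sum f {a,c} \<le> sum f A" by (intro sum_mono2) auto
  then show ?thesis using \<open>a\<noteq>c\<close> by simp
qed

theorem mainTheorem6:
  fixes prim :: "'p \<Rightarrow> ('x \<Rightarrow> int) \<Rightarrow> heap set"
    and \<eta> :: "'x \<Rightarrow> int"
    and L R :: "(('p, 'v, 'x) assn \<times> 'v list) list"
    and B :: "'v set"
  assumes canon: "canonical L R"
    and BV: "B \<subseteq> Vset L"
    and B1: "\<forall>i<length L. (\<Sum>c\<in>B. Pi L i c) \<le> 1"
    and B2: "\<forall>j<length R. (\<Sum>c\<in>Vset L. Omega R j c) = 0 \<or> (\<Sum>c\<in>B. Omega R j c) = 1"
    and B3: "\<forall>i<length L. \<forall>j<length R. \<not> Pi_ge_Omega L R i j \<longrightarrow> (\<exists>c\<in>B. Pi L i c < Omega R j c)"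
    and valid: "unary_valid prim \<eta> (canon_lhs L) (canon_rhs R)"
  shows "parametricity_condition prim \<eta> L R"
proof -
  have Lne: "L \<noteq> []" and phiL: "\<forall>i<length L. avars (fst (L!i)) = {}"
    and psiR: "\<forall>j<length R. avars (fst (R ! j)) = {}"
    and subR: "\<forall>j<length R. set (snd (R ! j)) \<subseteq> Vset L"
    using canon unfolding canonical_def Vset_def by auto
  have finV: "finite (Vset L)" unfolding Vset_def by auto
  have finB: "finite B" using BV finV finite_subset by blast
  show ?thesis unfolding parametricity_condition_def
  proof (intro allI impI)
    fix h hs assume H: "\<forall>i<length L. hs i \<sqsubseteq> h \<and> hs i \<in> sem1 prim \<eta> (\<lambda>_. {}) (fst (L!i))"
    show "(\<exists>i<length L. \<exists>j<length R. hs i \<in> sem1 prim \<eta> (\<lambda>_. {}) (fst (R ! j)) \<and> Pi_ge_Omega L R i j)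
      \<or> (\<exists>j<length R. snd (R ! j) = [] \<and> h \<in> sem1 prim \<eta> (\<lambda>_. {}) (fst (R ! j)))"
    proof (rule ccontr)
      assume NN: "\<not> ?thesis"
      then have N1: "\<forall>i<length L. \<forall>j<length R. hs i \<in> sem1 prim \<eta> (\<lambda>_. {}) (fst (R!j)) \<longrightarrow> \<not> Pi_ge_Omega L R i j"
        and N2: "\<forall>j<length R. snd (R!j) = [] \<longrightarrow> h \<notin> sem1 prim \<eta> (\<lambda>_. {}) (fst (R!j))" by blast+
      define \<rho> where "\<rho> = (\<lambda>a. if a \<in> B then Delta1 {hminus h (hs k) | k. k < length L \<and> a \<in> set (snd (L!k))} else UNIV)"
      have up\<rho>: "\<forall>a. upclosed (\<rho> a)" by (auto simp: \<rho>_def upclosed_def Delta1_def intro: le_trans)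
      have sem\<phi>: "sem1 prim \<eta> \<rho> (fst (L!i)) = sem1 prim \<eta> (\<lambda>_.{}) (fst (L!i))" if "i < length L" for i
        by (rule sem_irrel) (use phiL that in auto)
      have sem\<psi>: "sem1 prim \<eta> \<rho> (fst (R!j)) = sem1 prim \<eta> (\<lambda>_.{}) (fst (R!j))" if "j < length R" for j
        by (rule sem_irrel) (use psiR that in auto)
      have ups: "upclosed (sem1 prim \<eta> \<rho> \<phi>)" for \<phi> by (rule upclosed_sem[OF up\<rho>])
      have each: "h \<in> sem1 prim \<eta> \<rho> (star_vars (fst (L!i)) (snd (L!i)))" if i: "i < length L" for i
      proof -
        have hsi: "hs i \<in> sem1 prim \<eta> \<rho> (fst (L!i))" using H i sem\<phi>[OF i] by auto
        have hsih: "hs i \<sqsubseteq> h" using H i by auto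
        show ?thesis
        proof (cases "\<exists>c\<in>B. c \<in> set (snd (L!i))")
          case True
          then obtain c where c: "c \<in> B" "c \<in> set (snd(L!i))" by blast
          then obtain xs ys where xy: "snd (L!i) = xs @ c # ys" by (meson split_list)
          have notB: "\<forall>a\<in>set xs \<union> set ys. a \<notin> B"
          proof (intro ballI notI)
            fix a assume a: "a \<in> set xs \<union> set ys" "a \<in> B"
            have "(\<Sum>c\<in>B. Pi L i c) \<ge> 2"
            proof (cases "a = c")
              case True
              then have "count_list xs c + count_list ys c \<noteq> 0" using a(1) count_list_0_iff[of xs c] count_list_0_iff[of ys c] by auto
              then have "Pi L i c \<ge> 2" unfolding Pi_def xy by simp linarith
              then show ?thesis using sum_ge1[OF finB c(1), of "Pi L i"] by linarith
            next
              case False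
              have "Pi L i a \<noteq> 0" "Pi L i c \<noteq> 0" unfolding Pi_def xy using a(1) count_list_0_iff[of xs a] count_list_0_iff[of ys a] by auto
              then show ?thesis using sum_ge2[OF finB a(2) c(1) False, of "Pi L i"] by linarith
            qed
            then show False using B1 i by fastforce
          qed
          have emp: "\<forall>a\<in>set xs \<union> set ys. hempty \<in> \<rho> a" using notB by (simp add: \<rho>_def)
          have r: "hminus h (hs i) \<in> \<rho> c" unfolding \<rho>_def using c i
            by (auto simp: Delta1_def heap_le_def)
          show ?thesis unfolding xy
            using lemB[OF hsi r split_heap(2)[OF hsih] emp] split_heap(1)[OF hsih] by simp
        next
          case False
          have "h \<in> sem1 prim \<eta> \<rho> (fst (L!i))" using ups hsi hsih unfolding upclosed_def by blast
          moreover have "\<forall>a\<in>set (snd (L!i)). hempty \<in> \<rho> a" using False by (auto simp: \<rho>_def)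
          ultimately show ?thesis by (rule lemA)
        qed
      qed
      have lhs: "h \<in> sem1 prim \<eta> \<rho> (canon_lhs L)"
        unfolding canon_lhs_def
      proof (subst sem_conj_list)
        show "map (\<lambda>(\<phi>, as). star_vars \<phi> as) L \<noteq> []" using Lne by simp
        show "\<forall>p\<in>set (map (\<lambda>(\<phi>, as). star_vars \<phi> as) L). h \<in> sem1 prim \<eta> \<rho> p"
        proof
          fix p assume "p \<in> set (map (\<lambda>(\<phi>, as). star_vars \<phi> as) L)"
          then obtain i where i: "i < length L" "p = (\<lambda>(\<phi>, as). star_vars \<phi> as) (L!i)"
            by (auto simp: in_set_conv_nth)
          then show "h \<in> sem1 prim \<eta> \<rho> p" using each[OF i(1)] by (simp add: case_prod_beta)
        qed
      qed
      have "h \<in> sem1 prim \<eta> \<rho> (canon_rhs R)"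
        using valid up\<rho> lhs unfolding unary_valid_def by blast
      then obtain p where "p \<in> set (map (\<lambda>(\<psi>, bs). star_vars \<psi> bs) R)" "h \<in> sem1 prim \<eta> \<rho> p"
        unfolding canon_rhs_def sem_disj_list by blast
      then obtain j where j: "j < length R" "h \<in> sem1 prim \<eta> \<rho> (star_vars (fst (R!j)) (snd (R!j)))"
        by (auto simp: in_set_conv_nth case_prod_beta)
      from B2 j(1) have "(\<Sum>c\<in>Vset L. Omega R j c) = 0 \<or> (\<Sum>c\<in>B. Omega R j c) = 1" by blast
      then show False
      proof
        assume z: "(\<Sum>c\<in>Vset L. Omega R j c) = 0"
        have "snd (R!j) = []"
        proof (rule ccontr)
          assume "snd (R!j) \<noteq> []"
          then obtain b where b: "b \<in> set (snd (R!j))" by (cases "snd (R!j)") auto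
          then have "b \<in> Vset L" using subR j(1) by blast
          moreover have "Omega R j b \<noteq> 0" using b count_list_0_iff unfolding Omega_def by metis
          ultimately show False using sum_ge1[OF finV, of b "Omega R j"] z by linarith
        qed
        then show False using j N2 sem\<psi>[OF j(1)] by (simp add: star_vars_nil)
      next
        assume o: "(\<Sum>c\<in>B. Omega R j c) = 1"
        then obtain c where c: "c \<in> B" "Omega R j c \<noteq> 0"
          by (metis sum.neutral zero_neq_one)
        have cin: "c \<in> set (snd (R!j))" using c(2) count_list_0_iff unfolding Omega_def by metis
        obtain g0 where g0: "g0 \<in> sem1 prim \<eta> \<rho> (fst (R!j))" "g0 \<sqsubseteq> h"
          and rr: "\<exists>r\<in>\<rho> c. r \<sqsubseteq> h \<and> heap_disj g0 r"
          using lemC[OF j(2)] cin by blast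
        then obtain r where r: "r \<in> \<rho> c" "heap_disj g0 r" by blast
        then obtain k where k: "k < length L" "c \<in> set (snd (L!k))" "hminus h (hs k) \<sqsubseteq> r"
          using c(1) unfolding \<rho>_def Delta1_def by auto
        have hsk: "hs k \<sqsubseteq> h" using H k(1) by auto
        have domr: "dom (Rep_heap (hminus h (hs k))) \<subseteq> dom (Rep_heap r)"
          using k(3) unfolding heap_le_def by (rule map_le_implies_dom_le)
        have "g0 \<sqsubseteq> hs k" unfolding heap_le_def map_le_def
        proof
          fix x assume x: "x \<in> dom (Rep_heap g0)"
          have gx: "Rep_heap g0 x = Rep_heap h x" using g0(2) x unfolding heap_le_def map_le_def by blast
          have "x \<notin> dom (Rep_heap r)" using r(2) x unfolding heap_disj_def by blast
          then have "x \<notin> dom (Rep_heap (hminus h (hs k)))" using domr by blast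
          moreover have "x \<in> dom (Rep_heap h)" using x gx by (simp add: domIff)
          ultimately have xk: "x \<in> dom (Rep_heap (hs k))" unfolding Rep_hminus by (auto simp: restrict_map_def split: if_splits)
          then show "Rep_heap g0 x = Rep_heap (hs k) x" using gx hsk unfolding heap_le_def map_le_def by metis
        qed
        then have "hs k \<in> sem1 prim \<eta> \<rho> (fst (R!j))" using ups g0(1) unfolding upclosed_def by blast
        then have "\<not> Pi_ge_Omega L R k j" using N1 k(1) j(1) sem\<psi>[OF j(1)] by auto
        then obtain c' where c': "c' \<in> B" "Pi L k c' < Omega R j c'" using B3 k(1) j(1) by blast
        have "c' = c"
        proof (rule ccontr)
          assume "c' \<noteq> c"
          then show False using sum_ge2[OF finB c'(1) c(1), of "Omega R j"] c(2) c'(2) o by linarith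
        qed
        moreover have "Omega R j c \<le> 1" using sum_ge1[OF finB c(1), of "Omega R j"] o by linarith
        moreover have "Pi L k c \<noteq> 0" using k(2) count_list_0_iff unfolding Pi_def by metis
        ultimately show False using c'(2) by simp
      qed
    qed
  qed
qed

end
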